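(* Let $f$ be a rational function with real coefficients such that $\int_{-\infty}^{\infty}f(x)\,dx$ is finite (absolutely convergent). Then $$\int_{-\infty}^{\infty}f(x)\,dx=\int_{-\infty}^{\infty}\Big[f\big(y+\sqrt{y^{2}+1}\big)+f\big(y-\sqrt{y^{2}+1}\big)\Big]dy+\int_{-\infty}^{\infty}\Big[f\big(y+\sqrt{y^{2}+1}\big)-f\big(y-\sqrt{y^{2}+1}\big)\Big]\frac{y\,dy}{\sqrt{y^{2}+1}}.$$ Moreover, if $f$ is even, the identity remains valid when every interval of integration $(-\infty,\infty)$ is replaced by $(0,\infty)$. *)

theory Defs
  imports "HOL-Analysis.Analysis" "HOL-Computational_Algebra.Polynomial"
begin

definition rat_fun :: "real poly \<Rightarrow> real poly \<Rightarrow> real \<Rightarrow> real" where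
  "rat_fun p q x = poly p x / poly q x"

definition rhs_integrand :: "(real \<Rightarrow> real) \<Rightarrow> real \<Rightarrow> real" where
  "rhs_integrand f y =
     (f (y + sqrt (y\<^sup>2 + 1)) + f (y - sqrt (y\<^sup>2 + 1)))
   + (f (y + sqrt (y\<^sup>2 + 1)) - f (y - sqrt (y\<^sup>2 + 1))) * (y / sqrt (y\<^sup>2 + 1))"

end

theory Submission
  imports Defs
begin

lemma split_UNIV:
  fixes h :: "real \<Rightarrow> real"
  assumes "h absolutely_integrable_on UNIV"
  shows "integral UNIV h = integral {..<0} h + integral {0<..} h"
proof -
  have a: "h absolutely_integrable_on {..<0}" "h absolutely_integrable_on {0<..}"
    using assms by (auto intro: set_integrable_subset)
  have "(h has_integral (integral {..<0} h + integral {0<..} h)) ({..<0} \<union> {0<..})"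
  proof (rule has_integral_Un)
    show "negligible ({..<0} \<inter> {0<..} :: real set)" by (metis Int_commute greaterThan_def lessThan_def negligible_empty disjoint_iff mem_Collect_eq order.asym)
  qed (use a in \<open>auto intro: integrable_integral dest: set_lebesgue_integral_eq_integral(1)\<close>)
  moreover have "(h has_integral (integral {..<0} h + integral {0<..} h)) ({..<0} \<union> {0<..})
     \<longleftrightarrow> (h has_integral (integral {..<0} h + integral {0<..} h)) UNIV"
    by (rule has_integral_spike_set_eq; rule negligible_subset[of "{0}"]) auto
  ultimately show ?thesis by (simp add: integral_unique)
qed

lemma even_half:
  fixes h :: "real \<Rightarrow> real"
  assumes "h absolutely_integrable_on UNIV" and ev: "\<And>x. h (-x) = h x"
  shows "integral {0<..} h = integral UNIV h / 2"
proof -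
  have a: "h absolutely_integrable_on {0<..}"
    using assms by (auto intro: set_integrable_subset)
  have "(\<lambda>x. \<bar>-1\<bar> * h (uminus x)) absolutely_integrable_on {0<..} \<and>
           integral {0<..} (\<lambda>x. \<bar>-1\<bar> * h (uminus x)) = integral {0<..} h
     \<longleftrightarrow> h absolutely_integrable_on (uminus ` {0<..}) \<and> integral (uminus ` {0<..}) h = integral {0<..} h"
    by (rule has_absolute_integral_change_of_variables_1') (auto intro!: derivative_eq_intros)
  moreover have "uminus ` {0<..} = {..<(0::real)}"
    by (auto simp: image_iff intro!: exI[of _ "- _"])
  ultimately have "integral {..<0} h = integral {0<..} h"
    using a ev by simp
  then show ?thesis using split_UNIV[OF assms(1)] by simp
qed

lemma lborel_abs:
  fixes h :: "real \<Rightarrow> real"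
  assumes "h \<in> borel_measurable borel"
  shows "integrable lborel h \<longleftrightarrow> h absolutely_integrable_on UNIV"
proof -
  have "h absolutely_integrable_on UNIV \<longleftrightarrow> integrable lebesgue h"
    by (simp add: set_integrable_def)
  also have "\<dots> \<longleftrightarrow> integrable lborel h"
    using assms by (intro integrable_completion) simp
  finally show ?thesis by simp
qed

lemma sq_gt: "\<bar>y\<bar> < sqrt (y\<^sup>2 + 1)"
proof -
  have "sqrt (y\<^sup>2) < sqrt (y\<^sup>2 + 1)" by (intro real_sqrt_less_mono) simp
  then show ?thesis by simp
qed

lemma inv_formula:
  fixes x y :: real
  assumes "x = y + sqrt (y\<^sup>2 + 1) \<or> x = y - sqrt (y\<^sup>2 + 1)"
  shows "y = (x\<^sup>2 - 1) / (2 * x)"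
proof -
  let ?s = "sqrt (y\<^sup>2 + 1)"
  have s2: "?s\<^sup>2 = y\<^sup>2 + 1" by simp
  have "\<bar>y\<bar> < ?s" by (rule sq_gt)
  then have x0: "x \<noteq> 0" using assms by auto
  have "x - y = ?s \<or> x - y = - ?s" using assms by auto
  then have "(x - y)\<^sup>2 = ?s\<^sup>2" by auto
  then have "(x - y)\<^sup>2 = y\<^sup>2 + 1" using s2 by simp
  then have "x\<^sup>2 - 2 * x * y = 1" by (simp add: power2_eq_square algebra_simps)
  then show ?thesis using x0 by (simp add: field_simps)
qed

lemma sqrt_form:
  fixes x :: real
  assumes "x \<noteq> 0"
  shows "sqrt (((x\<^sup>2 - 1) / (2 * x))\<^sup>2 + 1) = \<bar>(x\<^sup>2 + 1) / (2 * x)\<bar>"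
proof -
  have "((x\<^sup>2 - 1) / (2 * x))\<^sup>2 + 1 = ((x\<^sup>2 + 1) / (2 * x))\<^sup>2"
    using assms by (simp add: field_simps power2_eq_square)
  then show ?thesis by simp
qed

lemma img1: "(\<lambda>y::real. y + sqrt (y\<^sup>2 + 1)) ` UNIV = {0<..}"
proof safe
  fix y :: real show "0 < y + sqrt (y\<^sup>2 + 1)" using sq_gt[of y] by linarith
next
  fix x :: real assume "0 < x"
  then have "sqrt (((x\<^sup>2 - 1) / (2 * x))\<^sup>2 + 1) = (x\<^sup>2 + 1) / (2 * x)"
    by (simp add: sqrt_form)
  moreover have "x = (x\<^sup>2 - 1) / (2 * x) + (x\<^sup>2 + 1) / (2 * x)"
    using \<open>0 < x\<close> by (simp add: field_simps power2_eq_square)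
  ultimately have "x = (x\<^sup>2 - 1) / (2 * x) + sqrt (((x\<^sup>2 - 1) / (2 * x))\<^sup>2 + 1)"
    by simp
  then show "x \<in> range (\<lambda>y::real. y + sqrt (y\<^sup>2 + 1))" by blast
qed

lemma img2: "(\<lambda>y::real. y - sqrt (y\<^sup>2 + 1)) ` UNIV = {..<0}"
proof safe
  fix y :: real show "y - sqrt (y\<^sup>2 + 1) < 0" using sq_gt[of y] by linarith
next
  fix x :: real assume "x < 0"
  then have "(x\<^sup>2 + 1) / (2 * x) < 0"
    by (simp add: divide_pos_neg add_pos_nonneg)
  then have "sqrt (((x\<^sup>2 - 1) / (2 * x))\<^sup>2 + 1) = - ((x\<^sup>2 + 1) / (2 * x))"
    using \<open>x < 0\<close> by (simp add: sqrt_form)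
  moreover have "x = (x\<^sup>2 - 1) / (2 * x) + (x\<^sup>2 + 1) / (2 * x)"
    using \<open>x < 0\<close> by (simp add: field_simps power2_eq_square)
  ultimately have "x = (x\<^sup>2 - 1) / (2 * x) - sqrt (((x\<^sup>2 - 1) / (2 * x))\<^sup>2 + 1)"
    by simp
  then show "x \<in> range (\<lambda>y::real. y - sqrt (y\<^sup>2 + 1))" by blast
qed

lemma der1: "((\<lambda>y::real. y + sqrt (y\<^sup>2 + 1)) has_field_derivative (1 + y / sqrt (y\<^sup>2 + 1))) (at y within S)"
proof -
  have p: "0 < y\<^sup>2 + 1" by (metis add_pos_nonneg zero_less_one zero_le_power2 add.commute)
  have "((\<lambda>y::real. y + sqrt (y\<^sup>2 + 1)) has_field_derivative (1 + inverse (sqrt (y\<^sup>2 + 1)) / 2 * (2 * y))) (at y within S)"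
    using p by (auto intro!: derivative_eq_intros)
  then show ?thesis by (simp add: divide_simps)
qed

lemma der2: "((\<lambda>y::real. y - sqrt (y\<^sup>2 + 1)) has_field_derivative (1 - y / sqrt (y\<^sup>2 + 1))) (at y within S)"
proof -
  have p: "0 < y\<^sup>2 + 1" by (metis add_pos_nonneg zero_less_one zero_le_power2 add.commute)
  have "((\<lambda>y::real. y - sqrt (y\<^sup>2 + 1)) has_field_derivative (1 - inverse (sqrt (y\<^sup>2 + 1)) / 2 * (2 * y))) (at y within S)"
    using p by (auto intro!: derivative_eq_intros)
  then show ?thesis by (simp add: divide_simps)
qed


lemma frac_lt: "0 < (s::real) \<Longrightarrow> \<bar>y\<bar> < s \<Longrightarrow> \<bar>y / s\<bar> < 1"
  by (simp add: abs_divide)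

lemma alg_id: "((a::real) + b) + (a - b) * t = (1 + t) * a + (1 - t) * b"
  by (simp add: algebra_simps)

lemma generic:
  fixes f :: "real \<Rightarrow> real"
  assumes fa: "f absolutely_integrable_on UNIV"
  shows "rhs_integrand f absolutely_integrable_on UNIV \<and> integral UNIV (rhs_integrand f) = integral UNIV f"
proof -
  define g1 where "g1 = (\<lambda>y::real. y + sqrt (y\<^sup>2 + 1))"
  define g2 where "g2 = (\<lambda>y::real. y - sqrt (y\<^sup>2 + 1))"
  define d1 where "d1 = (\<lambda>y::real. 1 + y / sqrt (y\<^sup>2 + 1))"
  define d2 where "d2 = (\<lambda>y::real. 1 - y / sqrt (y\<^sup>2 + 1))"
  have pos: "0 < d1 y \<and> 0 < d2 y" for y
  proof -
    have a: "\<bar>y\<bar> < sqrt (y\<^sup>2 + 1)" by (rule sq_gt)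
    then have sp: "0 < sqrt (y\<^sup>2 + 1)" by linarith
    have "\<bar>y / sqrt (y\<^sup>2 + 1)\<bar> < 1" using frac_lt[OF sp a] .
    then show ?thesis unfolding d1_def d2_def by linarith
  qed
  have inj1: "inj_on g1 UNIV"
  proof (rule inj_onI)
    fix a b assume e: "g1 a = g1 b" "a \<in> UNIV" "b \<in> UNIV"
    have "a = ((g1 a)\<^sup>2 - 1) / (2 * g1 a)" by (rule inv_formula) (simp add: g1_def)
    moreover have "b = ((g1 b)\<^sup>2 - 1) / (2 * g1 b)" by (rule inv_formula) (simp add: g1_def)
    ultimately show "a = b" using e(1) by metis
  qed
  have inj2: "inj_on g2 UNIV"
  proof (rule inj_onI)
    fix a b assume e: "g2 a = g2 b" "a \<in> UNIV" "b \<in> UNIV"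
    have "a = ((g2 a)\<^sup>2 - 1) / (2 * g2 a)" by (rule inv_formula) (simp add: g2_def)
    moreover have "b = ((g2 b)\<^sup>2 - 1) / (2 * g2 b)" by (rule inv_formula) (simp add: g2_def)
    ultimately show "a = b" using e(1) by metis
  qed
  have fp: "f absolutely_integrable_on {0<..}" and fn: "f absolutely_integrable_on {..<0}"
    using fa by (auto intro: set_integrable_subset)
  have im1: "g1 ` UNIV = {0<..}" unfolding g1_def by (rule img1)
  have "(\<lambda>x. \<bar>d1 x\<bar> * f (g1 x)) absolutely_integrable_on UNIV \<and>
           integral UNIV (\<lambda>x. \<bar>d1 x\<bar> * f (g1 x)) = integral {0<..} f
     \<longleftrightarrow> f absolutely_integrable_on (g1 ` UNIV) \<and> integral (g1 ` UNIV) f = integral {0<..} f"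
  proof (rule has_absolute_integral_change_of_variables_1')
    fix x :: real show "(g1 has_field_derivative d1 x) (at x within UNIV)"
      unfolding g1_def d1_def by (rule der1)
  qed (simp_all add: inj1)
  then have c1: "(\<lambda>x. \<bar>d1 x\<bar> * f (g1 x)) absolutely_integrable_on UNIV \<and>
           integral UNIV (\<lambda>x. \<bar>d1 x\<bar> * f (g1 x)) = integral {0<..} f"
    unfolding im1 using fp by blast
  have im2: "g2 ` UNIV = {..<0}" unfolding g2_def by (rule img2)
  have "(\<lambda>x. \<bar>d2 x\<bar> * f (g2 x)) absolutely_integrable_on UNIV \<and>
           integral UNIV (\<lambda>x. \<bar>d2 x\<bar> * f (g2 x)) = integral {..<0} f
     \<longleftrightarrow> f absolutely_integrable_on (g2 ` UNIV) \<and> integral (g2 ` UNIV) f = integral {..<0} f"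
  proof (rule has_absolute_integral_change_of_variables_1')
    fix x :: real show "(g2 has_field_derivative d2 x) (at x within UNIV)"
      unfolding g2_def d2_def by (rule der2)
  qed (simp_all add: inj2)
  then have c2: "(\<lambda>x. \<bar>d2 x\<bar> * f (g2 x)) absolutely_integrable_on UNIV \<and>
           integral UNIV (\<lambda>x. \<bar>d2 x\<bar> * f (g2 x)) = integral {..<0} f"
    unfolding im2 using fn by blast
  have eq: "rhs_integrand f = (\<lambda>x. \<bar>d1 x\<bar> * f (g1 x) + \<bar>d2 x\<bar> * f (g2 x))"
  proof
    fix y
    show "rhs_integrand f y = \<bar>d1 y\<bar> * f (g1 y) + \<bar>d2 y\<bar> * f (g2 y)"
    proof -
      have h1: "\<bar>d1 y\<bar> = 1 + y / sqrt (y\<^sup>2 + 1)" and h2: "\<bar>d2 y\<bar> = 1 - y / sqrt (y\<^sup>2 + 1)"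
        using pos[of y] unfolding d1_def d2_def by auto
      show ?thesis by (simp only: h1 h2 rhs_integrand_def g1_def g2_def alg_id)
    qed
  qed
  have i1: "(\<lambda>x. \<bar>d1 x\<bar> * f (g1 x)) integrable_on UNIV"
    by (rule set_lebesgue_integral_eq_integral(1)[OF conjunct1[OF c1]])
  have i2: "(\<lambda>x. \<bar>d2 x\<bar> * f (g2 x)) integrable_on UNIV"
    by (rule set_lebesgue_integral_eq_integral(1)[OF conjunct1[OF c2]])
  have "rhs_integrand f absolutely_integrable_on UNIV"
    unfolding eq by (rule set_integral_add(1)[OF conjunct1[OF c1] conjunct1[OF c2]])
  moreover have "integral UNIV (rhs_integrand f) = integral UNIV f"
  proof -
    have "integral UNIV (\<lambda>x. \<bar>d1 x\<bar> * f (g1 x) + \<bar>d2 x\<bar> * f (g2 x))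
       = integral UNIV (\<lambda>x. \<bar>d1 x\<bar> * f (g1 x)) + integral UNIV (\<lambda>x. \<bar>d2 x\<bar> * f (g2 x))"
      by (rule integral_add[OF i1 i2])
    then show ?thesis unfolding eq using conjunct2[OF c1] conjunct2[OF c2] split_UNIV[OF fa] by linarith
  qed
  ultimately show ?thesis by blast
qed


lemma rhs_even:
  fixes f :: "real \<Rightarrow> real"
  assumes ev: "\<forall>x. f (-x) = f x"
  shows "rhs_integrand f (-y) = rhs_integrand f y"
proof -
  let ?s = "sqrt (y\<^sup>2 + 1)"
  have a: "f (- y + ?s) = f (y - ?s)" using ev[rule_format, of "y - ?s"] by simp
  have b: "f (- y - ?s) = f (y + ?s)" using ev[rule_format, of "y + ?s"] by simp
  have "rhs_integrand f (-y) = (f (- y + ?s) + f (- y - ?s)) + (f (- y + ?s) - f (- y - ?s)) * (- (y / ?s))"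
    unfolding rhs_integrand_def by simp
  also have "\<dots> = rhs_integrand f y" unfolding a b rhs_integrand_def by (simp add: algebra_simps)
  finally show ?thesis .
qed

lemma rat_meas: "rat_fun p q \<in> borel_measurable borel"
  unfolding rat_fun_def by (intro borel_measurable_divide borel_measurable_continuous_onI continuous_intros)

lemma rhs_meas:
  assumes [measurable]: "f \<in> borel_measurable borel"
  shows "rhs_integrand f \<in> borel_measurable borel"
  unfolding rhs_integrand_def by measurable

theorem mainTheorem3:
  fixes p q :: "real poly"
  assumes "q \<noteq> 0"
    and "integrable lborel (rat_fun p q)"
  shows "(integrable lborel (rhs_integrand (rat_fun p q))
          \<and> integral\<^sup>L lborel (rat_fun p q) = integral\<^sup>L lborel (rhs_integrand (rat_fun p q)))
       \<and> ((\<forall>x. rat_fun p q (-x) = rat_fun p q x) \<longrightarrow>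
          (set_integrable lborel {0<..} (rhs_integrand (rat_fun p q))
           \<and> (LINT x:{0<..}|lborel. rat_fun p q x)
               = (LINT y:{0<..}|lborel. rhs_integrand (rat_fun p q) y)))"
proof -
  define f where "f = rat_fun p q"
  have mf: "f \<in> borel_measurable borel" unfolding f_def by (rule rat_meas)
  have mr: "rhs_integrand f \<in> borel_measurable borel" by (rule rhs_meas[OF mf])
  have fl: "integrable lborel f" using assms(2) unfolding f_def .
  have fa: "f absolutely_integrable_on UNIV" using fl lborel_abs[OF mf] by blast
  have G: "rhs_integrand f absolutely_integrable_on UNIV \<and> integral UNIV (rhs_integrand f) = integral UNIV f"
    by (rule generic[OF fa])
  have rl: "integrable lborel (rhs_integrand f)" using G lborel_abs[OF mr] by blast
  have part1: "integrable lborel (rhs_integrand f) \<and> integral\<^sup>L lborel f = integral\<^sup>L lborel (rhs_integrand f)"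
    using rl G integral_lborel[OF fl] integral_lborel[OF rl] by simp
  have part2: "set_integrable lborel {0<..} (rhs_integrand f)
           \<and> (LINT x:{0<..}|lborel. f x) = (LINT y:{0<..}|lborel. rhs_integrand f y)"
    if ev: "\<forall>x. f (-x) = f x"
  proof -
    have sr: "set_integrable lborel {0<..} (rhs_integrand f)"
      unfolding set_integrable_def by (rule integrable_mult_indicator[OF _ rl]) simp
    have sf: "set_integrable lborel {0<..} f"
      unfolding set_integrable_def by (rule integrable_mult_indicator[OF _ fl]) simp
    have "(LINT x:{0<..}|lborel. f x) = integral {0<..} f"
      by (rule set_borel_integral_eq_integral(2)[OF sf])
    also have "\<dots> = integral UNIV f / 2"
      by (rule even_half[OF fa]) (use ev in blast)
    also have "\<dots> = integral UNIV (rhs_integrand f) / 2" using G by simp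
    also have "\<dots> = integral {0<..} (rhs_integrand f)"
      by (rule even_half[OF conjunct1[OF G], symmetric]) (rule rhs_even[OF ev])
    also have "\<dots> = (LINT y:{0<..}|lborel. rhs_integrand f y)"
      by (rule set_borel_integral_eq_integral(2)[OF sr, symmetric])
    finally show ?thesis using sr by simp
  qed
  show ?thesis using part1 part2 unfolding f_def by blast
qed

end
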